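(* Consider TD-SVRG (Algorithm 1, as defined in the context) run on a dataset with any step size $\alpha>0$ and any inner-loop length $M\ge 1$. Then for every epoch $m\ge 1$, $$2\alpha M\,\mathbb E[f_d(\tilde\theta_m)]-2M\alpha^2\,\mathbb E[w(\tilde\theta_m)]\le \mathbb E\big[\|\tilde\theta_{m-1}-\theta^*\|^2\big]+2\alpha^2M\,\mathbb E[w(\tilde\theta_{m-1})],$$ where the expectations are over all randomness of the algorithm (all previous epochs and the samples drawn in epoch $m$).
   Context: Finite-sample setting. Let $\mathcal S$ be a finite state space, $\phi:\mathcal S\to\mathbb R^d$ a feature map with $\|\phi(s)\|_2\le 1$ for all $s$, $r:\mathcal S\times\mathcal S\to\mathbb R$ a reward function and $\gamma\in[0,1)$. For a pair of states $(s,s')$ and $\theta\in\mathbb R^d$ let $g_{s,s'}(\theta)=(r(s,s')+\gamma\phi(s')^T\theta-\phi(s)^T\theta)\phi(s)$. A dataset is a state trajectory $s_1,\dots,s_{N+1}$, giving the $N$ pairs $(s_t,s_{t+1})$, $t=1,\dots,N$. Let $A_d=\frac1N\sum_{t=1}^N\phi(s_t)(\phi(s_t)-\gamma\phi(s_{t+1}))^T$ and $b_d=\frac1N\sum_{t=1}^N r(s_t,s_{t+1})\phi(s_t)$, so that $\bar g(\theta):=\frac1N\sum_{t=1}^N g_{s_t,s_{t+1}}(\theta)=-A_d\theta+b_d$. Assume $A_d$ is nonsingular and let $\theta^*=A_d^{-1}b_d$. Define $f_d(\theta)=(\theta-\theta^* )^TA_d(\theta-\theta^* )$ and $w(\theta)=\frac1N\sum_{t=1}^N\|g_{s_t,s_{t+1}}(\theta)-g_{s_t,s_{t+1}}(\theta^*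 )\|^2$. Algorithm 1 (TD-SVRG): given $\alpha>0$, an integer $M\ge1$ and an initial $\tilde\theta_0\in\mathbb R^d$, for epochs $m=1,2,\dots$: set $\tilde\theta=\tilde\theta_{m-1}$, compute $\bar g(\tilde\theta)$, set $\theta_0=\tilde\theta$; for $t=1,\dots,M$ draw an index $i_t$ uniformly from $\{1,\dots,N\}$, independently of everything else, put $(s,s')=(s_{i_t},s_{i_t+1})$, $v_t=g_{s,s'}(\theta_{t-1})-g_{s,s'}(\tilde\theta)+\bar g(\tilde\theta)$ and $\theta_t=\theta_{t-1}+\alpha v_t$; finally set $\tilde\theta_m=\theta_{t'}$ where $t'$ is drawn uniformly from $\{0,\dots,M-1\}$ independently of everything else. *)

theory Defs
  imports "HOL-Analysis.Analysis" "HOL-Probability.Probability"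
begin

text \<open>Dataset: trajectory s :: nat => 'a, states s 1, ..., s (N+1), giving pairs (s t, s (t+1)), t = 1..N.
  Features phi :: 'a => real^'d, reward r, discount gamma.\<close>

definition tdg :: "('a \<Rightarrow> real^'d) \<Rightarrow> ('a \<Rightarrow> 'a \<Rightarrow> real) \<Rightarrow> real \<Rightarrow> 'a \<Rightarrow> 'a \<Rightarrow> real^'d \<Rightarrow> real^'d" where
  "tdg \<phi> r \<gamma> s s' \<theta> = (r s s' + \<gamma> * (\<phi> s' \<bullet> \<theta>) - \<phi> s \<bullet> \<theta>) *\<^sub>R \<phi> s"

definition gbar :: "('a \<Rightarrow> real^'d) \<Rightarrow> ('a \<Rightarrow> 'a \<Rightarrow> real) \<Rightarrow> real \<Rightarrow> (nat \<Rightarrow> 'a) \<Rightarrow> nat \<Rightarrow> real^'d \<Rightarrow> real^'d" where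
  "gbar \<phi> r \<gamma> s N \<theta> = (1 / real N) *\<^sub>R (\<Sum>t\<in>{1..N}. tdg \<phi> r \<gamma> (s t) (s (Suc t)) \<theta>)"

definition A_d :: "('a \<Rightarrow> real^'d) \<Rightarrow> real \<Rightarrow> (nat \<Rightarrow> 'a) \<Rightarrow> nat \<Rightarrow> real^'d^'d" where
  "A_d \<phi> \<gamma> s N = (\<chi> i j. (1 / real N) *
      (\<Sum>t\<in>{1..N}. (\<phi> (s t)) $ i * (\<phi> (s t) - \<gamma> *\<^sub>R \<phi> (s (Suc t))) $ j))"

definition b_d :: "('a \<Rightarrow> real^'d) \<Rightarrow> ('a \<Rightarrow> 'a \<Rightarrow> real) \<Rightarrow> (nat \<Rightarrow> 'a) \<Rightarrow> nat \<Rightarrow> real^'d" where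
  "b_d \<phi> r s N = (1 / real N) *\<^sub>R (\<Sum>t\<in>{1..N}. r (s t) (s (Suc t)) *\<^sub>R \<phi> (s t))"

definition theta_star :: "('a \<Rightarrow> real^'d) \<Rightarrow> ('a \<Rightarrow> 'a \<Rightarrow> real) \<Rightarrow> real \<Rightarrow> (nat \<Rightarrow> 'a) \<Rightarrow> nat \<Rightarrow> real^'d" where
  "theta_star \<phi> r \<gamma> s N = matrix_inv (A_d \<phi> \<gamma> s N) *v b_d \<phi> r s N"

definition f_d :: "('a \<Rightarrow> real^'d) \<Rightarrow> ('a \<Rightarrow> 'a \<Rightarrow> real) \<Rightarrow> real \<Rightarrow> (nat \<Rightarrow> 'a) \<Rightarrow> nat \<Rightarrow> real^'d \<Rightarrow> real" where
  "f_d \<phi> r \<gamma> s N \<theta> = (\<theta> - theta_star \<phi> r \<gamma> s N) \<bullet> (A_d \<phi> \<gamma> s N *v (\<theta> - theta_star \<phi> r \<gamma> s N))"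

definition w_d :: "('a \<Rightarrow> real^'d) \<Rightarrow> ('a \<Rightarrow> 'a \<Rightarrow> real) \<Rightarrow> real \<Rightarrow> (nat \<Rightarrow> 'a) \<Rightarrow> nat \<Rightarrow> real^'d \<Rightarrow> real" where
  "w_d \<phi> r \<gamma> s N \<theta> = (1 / real N) * (\<Sum>t\<in>{1..N}.
      (norm (tdg \<phi> r \<gamma> (s t) (s (Suc t)) \<theta> - tdg \<phi> r \<gamma> (s t) (s (Suc t)) (theta_star \<phi> r \<gamma> s N)))\<^sup>2)"

fun svrg_inner :: "('a \<Rightarrow> real^'d) \<Rightarrow> ('a \<Rightarrow> 'a \<Rightarrow> real) \<Rightarrow> real \<Rightarrow> (nat \<Rightarrow> 'a) \<Rightarrow> nat \<Rightarrow> real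
     \<Rightarrow> real^'d \<Rightarrow> nat \<Rightarrow> (real^'d) pmf" where
  "svrg_inner \<phi> r \<gamma> s N \<alpha> \<theta>t 0 = return_pmf \<theta>t"
| "svrg_inner \<phi> r \<gamma> s N \<alpha> \<theta>t (Suc k) =
     bind_pmf (svrg_inner \<phi> r \<gamma> s N \<alpha> \<theta>t k) (\<lambda>\<theta>.
       map_pmf (\<lambda>i. \<theta> + \<alpha> *\<^sub>R (tdg \<phi> r \<gamma> (s i) (s (Suc i)) \<theta> - tdg \<phi> r \<gamma> (s i) (s (Suc i)) \<theta>t
                                 + gbar \<phi> r \<gamma> s N \<theta>t))
               (pmf_of_set {1..N}))"

definition svrg_epoch :: "('a \<Rightarrow> real^'d) \<Rightarrow> ('a \<Rightarrow> 'a \<Rightarrow> real) \<Rightarrow> real \<Rightarrow> (nat \<Rightarrow> 'a) \<Rightarrow> nat \<Rightarrow> real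
     \<Rightarrow> nat \<Rightarrow> real^'d \<Rightarrow> (real^'d) pmf" where
  "svrg_epoch \<phi> r \<gamma> s N \<alpha> M \<theta>t =
     bind_pmf (pmf_of_set {0..<M}) (\<lambda>t'. svrg_inner \<phi> r \<gamma> s N \<alpha> \<theta>t t')"

fun svrg_run :: "('a \<Rightarrow> real^'d) \<Rightarrow> ('a \<Rightarrow> 'a \<Rightarrow> real) \<Rightarrow> real \<Rightarrow> (nat \<Rightarrow> 'a) \<Rightarrow> nat \<Rightarrow> real
     \<Rightarrow> nat \<Rightarrow> real^'d \<Rightarrow> nat \<Rightarrow> (real^'d) pmf" where
  "svrg_run \<phi> r \<gamma> s N \<alpha> M \<theta>0 0 = return_pmf \<theta>0"
| "svrg_run \<phi> r \<gamma> s N \<alpha> M \<theta>0 (Suc m) =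
     bind_pmf (svrg_run \<phi> r \<gamma> s N \<alpha> M \<theta>0 m) (svrg_epoch \<phi> r \<gamma> s N \<alpha> M)"

end

theory Submission
  imports Defs
begin

lemma A_mult:
  "A_d \<phi> \<gamma> s N *v c = (1 / real N) *\<^sub>R (\<Sum>t\<in>{1..N}. ((\<phi> (s t) - \<gamma> *\<^sub>R \<phi> (s (Suc t))) \<bullet> c) *\<^sub>R \<phi> (s t))"
proof (subst vec_eq_iff, intro allI)
  fix i
  have "(\<Sum>j\<in>UNIV. \<Sum>n\<in>{1..N}. c $ j * (\<phi> (s n) $ i * (\<phi> (s n) $ j - \<gamma> * \<phi> (s (Suc n)) $ j)) / real N)
      = (\<Sum>n\<in>{1..N}. \<Sum>j\<in>UNIV. c $ j * (\<phi> (s n) $ i * (\<phi> (s n) $ j - \<gamma> * \<phi> (s (Suc n)) $ j)) / real N)"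
    by (rule sum.swap)
  then show "(A_d \<phi> \<gamma> s N *v c) $ i = ((1 / real N) *\<^sub>R (\<Sum>t\<in>{1..N}. ((\<phi> (s t) - \<gamma> *\<^sub>R \<phi> (s (Suc t))) \<bullet> c) *\<^sub>R \<phi> (s t))) $ i"
    by (simp add: A_d_def matrix_vector_mult_def inner_vec_def sum_distrib_left
        sum_distrib_right sum_component mult_ac sum_divide_distrib)
qed

lemma gbar_eq:
  "gbar \<phi> r \<gamma> s N \<theta> = b_d \<phi> r s N - A_d \<phi> \<gamma> s N *v \<theta>"
proof -
  have "tdg \<phi> r \<gamma> (s t) (s (Suc t)) \<theta> = r (s t) (s (Suc t)) *\<^sub>R \<phi> (s t)
      - ((\<phi> (s t) - \<gamma> *\<^sub>R \<phi> (s (Suc t))) \<bullet> \<theta>) *\<^sub>R \<phi> (s t)" for t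
    by (simp add: tdg_def inner_diff_left algebra_simps)
  then show ?thesis
    by (simp add: gbar_def b_d_def A_mult sum_subtractf scaleR_diff_right)
qed

lemma A_theta_star:
  assumes "invertible (A_d \<phi> \<gamma> s N)"
  shows "A_d \<phi> \<gamma> s N *v theta_star \<phi> r \<gamma> s N = b_d \<phi> r s N"
proof -
  let ?A = "A_d \<phi> \<gamma> s N"
  have "?A ** matrix_inv ?A = mat 1 \<and> matrix_inv ?A ** ?A = mat 1"
    using assms unfolding invertible_def matrix_inv_def by (rule someI_ex)
  then show ?thesis
    by (simp add: theta_star_def matrix_vector_mul_assoc)
qed

lemma gbar_star:
  assumes "invertible (A_d \<phi> \<gamma> s N)"
  shows "gbar \<phi> r \<gamma> s N (theta_star \<phi> r \<gamma> s N) = 0"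
  using A_theta_star[OF assms] by (simp add: gbar_eq)

lemma tdg_diff:
  "tdg \<phi> r \<gamma> x y \<theta> - tdg \<phi> r \<gamma> x y T = (\<gamma> * (\<phi> y \<bullet> (\<theta> - T)) - \<phi> x \<bullet> (\<theta> - T)) *\<^sub>R \<phi> x"
  by (simp add: tdg_def inner_diff_right algebra_simps)

lemma f_d_eq:
  "f_d \<phi> r \<gamma> s N \<theta> = - (1 / real N) * (\<Sum>t\<in>{1..N}. (\<theta> - theta_star \<phi> r \<gamma> s N) \<bullet>
      (tdg \<phi> r \<gamma> (s t) (s (Suc t)) \<theta> - tdg \<phi> r \<gamma> (s t) (s (Suc t)) (theta_star \<phi> r \<gamma> s N)))"
proof -
  define c where "c = \<theta> - theta_star \<phi> r \<gamma> s N"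
  have "f_d \<phi> r \<gamma> s N \<theta> = (1 / real N) * (\<Sum>t\<in>{1..N}. ((\<phi> (s t) - \<gamma> *\<^sub>R \<phi> (s (Suc t))) \<bullet> c) * (c \<bullet> \<phi> (s t)))"
    by (simp add: f_d_def A_mult inner_sum_right c_def[symmetric])
  also have "\<dots> = - (1 / real N) * (\<Sum>t\<in>{1..N}. c \<bullet>
      (tdg \<phi> r \<gamma> (s t) (s (Suc t)) \<theta> - tdg \<phi> r \<gamma> (s t) (s (Suc t)) (theta_star \<phi> r \<gamma> s N)))"
    unfolding tdg_diff c_def[symmetric]
    by (simp add: inner_diff_left algebra_simps inner_commute sum_subtractf)
  finally show ?thesis by (simp add: c_def)
qed

lemma avg_bound:
  fixes d e :: "nat \<Rightarrow> 'v::real_inner" and c :: 'v and \<alpha> :: real and I :: "nat set"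
  assumes "finite I" "I \<noteq> {}"
  defines "eb \<equiv> (1 / real (card I)) *\<^sub>R (\<Sum>t\<in>I. e t)"
  shows "(\<Sum>t\<in>I. (norm (c + \<alpha> *\<^sub>R (d t - e t + eb)))\<^sup>2) \<le> real (card I) * (norm c)\<^sup>2
     + 2 * \<alpha> * (\<Sum>t\<in>I. c \<bullet> d t) + 2 * \<alpha>\<^sup>2 * (\<Sum>t\<in>I. (norm (d t))\<^sup>2) + 2 * \<alpha>\<^sup>2 * (\<Sum>t\<in>I. (norm (e t))\<^sup>2)"
proof -
  define n where "n = real (card I)"
  have n0: "n > 0" using assms(1,2) by (simp add: n_def card_gt_0_iff)
  have sumE: "(\<Sum>t\<in>I. e t) = n *\<^sub>R eb" using n0 by (simp add: eb_def n_def)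
  have sq: "(norm (c + \<alpha> *\<^sub>R v))\<^sup>2 = (norm c)\<^sup>2 + 2 * \<alpha> * (c \<bullet> v) + \<alpha>\<^sup>2 * (norm v)\<^sup>2" for v :: 'v
    unfolding power2_norm_eq_inner by (simp add: inner_add_left inner_add_right power2_eq_square inner_commute algebra_simps)
  have vb: "(norm (x - y))\<^sup>2 \<le> 2 * (norm x)\<^sup>2 + 2 * (norm y)\<^sup>2" for x y :: 'v
  proof -
    have "norm (x - y) \<le> norm x + norm y" by (rule norm_triangle_ineq4)
    then have "(norm (x - y))\<^sup>2 \<le> (norm x + norm y)\<^sup>2" by (simp add: power_mono)
    also have "\<dots> \<le> 2 * (norm x)\<^sup>2 + 2 * (norm y)\<^sup>2"
    proof -
      have "(norm x + norm y)\<^sup>2 = 2 * (norm x)\<^sup>2 + 2 * (norm y)\<^sup>2 - (norm x - norm y)\<^sup>2"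
        by (simp add: power2_eq_square algebra_simps)
      moreover have "0 \<le> (norm x - norm y)\<^sup>2" by simp
      ultimately show ?thesis by linarith
    qed
    finally show ?thesis .
  qed
  have ce: "(\<Sum>t\<in>I. c \<bullet> (e t - eb)) = 0"
    using n0 by (simp add: inner_diff_right sum_subtractf inner_sum_right[symmetric] sumE n_def)
  have var: "(\<Sum>t\<in>I. (norm (e t - eb))\<^sup>2) \<le> (\<Sum>t\<in>I. (norm (e t))\<^sup>2)"
  proof -
    have "(\<Sum>t\<in>I. (norm (e t - eb))\<^sup>2) = (\<Sum>t\<in>I. (norm (e t))\<^sup>2 - 2 * (e t \<bullet> eb) + (norm eb)\<^sup>2)"
      by (intro sum.cong) (simp_all add: power2_norm_eq_inner inner_diff_left inner_diff_right inner_commute)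
    also have "\<dots> = (\<Sum>t\<in>I. (norm (e t))\<^sup>2) - 2 * ((\<Sum>t\<in>I. e t) \<bullet> eb) + n * (norm eb)\<^sup>2"
      by (simp add: sum.distrib sum_subtractf sum_distrib_left[symmetric] inner_sum_left n_def)
    also have "\<dots> = (\<Sum>t\<in>I. (norm (e t))\<^sup>2) - n * (norm eb)\<^sup>2"
      by (simp add: sumE power2_norm_eq_inner)
    also have "\<dots> \<le> (\<Sum>t\<in>I. (norm (e t))\<^sup>2)" using n0 by simp
    finally show ?thesis .
  qed
  have "(\<Sum>t\<in>I. (norm (c + \<alpha> *\<^sub>R (d t - e t + eb)))\<^sup>2)
      = (\<Sum>t\<in>I. (norm c)\<^sup>2 + 2 * \<alpha> * (c \<bullet> d t) - 2 * \<alpha> * (c \<bullet> (e t - eb)) + \<alpha>\<^sup>2 * (norm (d t - (e t - eb)))\<^sup>2)"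
  proof (intro sum.cong refl)
    fix t
    have ev: "d t - e t + eb = d t - (e t - eb)" by simp
    show "(norm (c + \<alpha> *\<^sub>R (d t - e t + eb)))\<^sup>2 = (norm c)\<^sup>2 + 2 * \<alpha> * (c \<bullet> d t) - 2 * \<alpha> * (c \<bullet> (e t - eb)) + \<alpha>\<^sup>2 * (norm (d t - (e t - eb)))\<^sup>2"
      unfolding ev sq inner_diff_right[of c "d t"] by (simp add: algebra_simps)
  qed
  also have "\<dots> = n * (norm c)\<^sup>2 + 2 * \<alpha> * (\<Sum>t\<in>I. c \<bullet> d t) - 2 * \<alpha> * (\<Sum>t\<in>I. c \<bullet> (e t - eb))
      + \<alpha>\<^sup>2 * (\<Sum>t\<in>I. (norm (d t - (e t - eb)))\<^sup>2)"
    by (simp add: sum.distrib sum_subtractf sum_distrib_left n_def)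
  also have "\<dots> \<le> n * (norm c)\<^sup>2 + 2 * \<alpha> * (\<Sum>t\<in>I. c \<bullet> d t) - 0
      + \<alpha>\<^sup>2 * (2 * (\<Sum>t\<in>I. (norm (d t))\<^sup>2) + 2 * (\<Sum>t\<in>I. (norm (e t))\<^sup>2))"
  proof -
    have "(\<Sum>t\<in>I. (norm (d t - (e t - eb)))\<^sup>2) \<le> (\<Sum>t\<in>I. 2 * (norm (d t))\<^sup>2 + 2 * (norm (e t - eb))\<^sup>2)"
      by (intro sum_mono vb)
    also have "\<dots> \<le> 2 * (\<Sum>t\<in>I. (norm (d t))\<^sup>2) + 2 * (\<Sum>t\<in>I. (norm (e t))\<^sup>2)"
      using var by (simp add: sum.distrib sum_distrib_left[symmetric])
    finally show ?thesis using ce by (simp add: mult_left_mono)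
  qed
  finally show ?thesis by (simp add: n_def algebra_simps)
qed

lemma exp_bind:
  fixes h :: "'b \<Rightarrow> real"
  assumes "finite (set_pmf p)" "\<And>x. x \<in> set_pmf p \<Longrightarrow> finite (set_pmf (f x))"
  shows "measure_pmf.expectation (bind_pmf p f) h = measure_pmf.expectation p (\<lambda>x. measure_pmf.expectation (f x) h)"
  using assms
  by (subst pmf_expectation_bind[of "set_pmf p"]) (auto simp: integral_measure_pmf_real[of "set_pmf p"] mult.commute)

context
  fixes \<phi> :: "'a \<Rightarrow> real^'d" and r :: "'a \<Rightarrow> 'a \<Rightarrow> real" and \<gamma> \<alpha> :: real
    and s :: "nat \<Rightarrow> 'a" and N M :: nat
  assumes N1: "N \<ge> 1" and inv: "invertible (A_d \<phi> \<gamma> s N)" and M1: "M \<ge> 1" and apos: "\<alpha> > 0"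
begin

abbreviation "TS \<equiv> theta_star \<phi> r \<gamma> s N"
abbreviation "Phi \<equiv> (\<lambda>\<theta>. (norm (\<theta> - TS))\<^sup>2)"
abbreviation "ff \<equiv> f_d \<phi> r \<gamma> s N"
abbreviation "ww \<equiv> w_d \<phi> r \<gamma> s N"
abbreviation "P \<equiv> svrg_inner \<phi> r \<gamma> s N \<alpha>"

lemma fin_inner: "finite (set_pmf (P \<theta>t k))"
  using N1 by (induction k) (auto simp: set_pmf_of_set)

lemma fin_epoch: "finite (set_pmf (svrg_epoch \<phi> r \<gamma> s N \<alpha> M \<theta>t))"
  using M1 by (auto simp: svrg_epoch_def set_pmf_of_set fin_inner)

lemma fin_run: "finite (set_pmf (svrg_run \<phi> r \<gamma> s N \<alpha> M \<theta>0 m))"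
  by (induction m) (auto simp: fin_epoch)

lemma step_point:
  "measure_pmf.expectation (map_pmf (\<lambda>i. \<theta> + \<alpha> *\<^sub>R (tdg \<phi> r \<gamma> (s i) (s (Suc i)) \<theta> - tdg \<phi> r \<gamma> (s i) (s (Suc i)) \<theta>t
                                 + gbar \<phi> r \<gamma> s N \<theta>t)) (pmf_of_set {1..N})) Phi
   \<le> Phi \<theta> - 2 * \<alpha> * ff \<theta> + 2 * \<alpha>\<^sup>2 * ww \<theta> + 2 * \<alpha>\<^sup>2 * ww \<theta>t"
proof -
  define g where "g = (\<lambda>t \<theta>. tdg \<phi> r \<gamma> (s t) (s (Suc t)) \<theta>)"
  define d where "d = (\<lambda>t. g t \<theta> - g t TS)"
  define e where "e = (\<lambda>t. g t \<theta>t - g t TS)"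
  define c where "c = \<theta> - TS"
  define eb where "eb = (1 / real (card {1..N})) *\<^sub>R (\<Sum>t\<in>{1..N}. e t)"
  have Npos: "real N > 0" using N1 by simp
  have ebg: "eb = gbar \<phi> r \<gamma> s N \<theta>t"
  proof -
    have "eb = gbar \<phi> r \<gamma> s N \<theta>t - gbar \<phi> r \<gamma> s N TS"
      by (simp add: eb_def e_def gbar_def g_def sum_subtractf scaleR_diff_right)
    then show ?thesis using gbar_star[OF inv] by simp
  qed
  have vt: "\<theta> + \<alpha> *\<^sub>R (g t \<theta> - g t \<theta>t + gbar \<phi> r \<gamma> s N \<theta>t) - TS = c + \<alpha> *\<^sub>R (d t - e t + eb)" for t
    by (simp add: ebg c_def d_def e_def algebra_simps)
  have "measure_pmf.expectation (map_pmf (\<lambda>i. \<theta> + \<alpha> *\<^sub>R (tdg \<phi> r \<gamma> (s i) (s (Suc i)) \<theta> - tdg \<phi> r \<gamma> (s i) (s (Suc i)) \<theta>t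
                                 + gbar \<phi> r \<gamma> s N \<theta>t)) (pmf_of_set {1..N})) Phi
      = (\<Sum>t\<in>{1..N}. (norm (c + \<alpha> *\<^sub>R (d t - e t + eb)))\<^sup>2) / real N"
    using N1 by (simp add: integral_pmf_of_set vt[unfolded g_def])
  also have "\<dots> \<le> (real N * (norm c)\<^sup>2
     + 2 * \<alpha> * (\<Sum>t\<in>{1..N}. c \<bullet> d t) + 2 * \<alpha>\<^sup>2 * (\<Sum>t\<in>{1..N}. (norm (d t))\<^sup>2) + 2 * \<alpha>\<^sup>2 * (\<Sum>t\<in>{1..N}. (norm (e t))\<^sup>2)) / real N"
    using avg_bound[of "{1..N}" c \<alpha> d e] N1 Npos by (intro divide_right_mono) (simp_all add: eb_def)
  also have "\<dots> = Phi \<theta> - 2 * \<alpha> * ff \<theta> + 2 * \<alpha>\<^sup>2 * ww \<theta> + 2 * \<alpha>\<^sup>2 * ww \<theta>t"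
  proof -
    have h1: "(\<Sum>t\<in>{1..N}. c \<bullet> d t) = - real N * ff \<theta>"
      using Npos unfolding f_d_eq[of \<phi> r \<gamma> s N \<theta>] by (simp add: c_def d_def g_def)
    have h2: "(\<Sum>t\<in>{1..N}. (norm (d t))\<^sup>2) = real N * ww \<theta>"
      using Npos unfolding w_d_def by (simp add: d_def g_def)
    have h3: "(\<Sum>t\<in>{1..N}. (norm (e t))\<^sup>2) = real N * ww \<theta>t"
      using Npos unfolding w_d_def by (simp add: e_def g_def)
    show ?thesis unfolding h1 h2 h3 using Npos
      by (simp add: c_def add_divide_distrib diff_divide_distrib)
  qed
  finally show ?thesis .
qed

lemma int_fin: "integrable (measure_pmf (P \<theta>t k)) (h :: _ \<Rightarrow> real)"
  by (rule integrable_measure_pmf_finite[OF fin_inner])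

lemma inner_step:
  "measure_pmf.expectation (P \<theta>t (Suc k)) Phi \<le> measure_pmf.expectation (P \<theta>t k) Phi
     - 2 * \<alpha> * measure_pmf.expectation (P \<theta>t k) ff + 2 * \<alpha>\<^sup>2 * measure_pmf.expectation (P \<theta>t k) ww
     + 2 * \<alpha>\<^sup>2 * ww \<theta>t"
proof -
  have "measure_pmf.expectation (P \<theta>t (Suc k)) Phi
     = measure_pmf.expectation (P \<theta>t k) (\<lambda>\<theta>. measure_pmf.expectation (map_pmf (\<lambda>i. \<theta> + \<alpha> *\<^sub>R (tdg \<phi> r \<gamma> (s i) (s (Suc i)) \<theta> - tdg \<phi> r \<gamma> (s i) (s (Suc i)) \<theta>t
                                 + gbar \<phi> r \<gamma> s N \<theta>t)) (pmf_of_set {1..N})) Phi)"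
    unfolding svrg_inner.simps
    by (rule exp_bind[OF fin_inner]) (use N1 in \<open>auto simp: set_pmf_of_set\<close>)
  also have "\<dots> \<le> measure_pmf.expectation (P \<theta>t k) (\<lambda>\<theta>. Phi \<theta> - 2 * \<alpha> * ff \<theta> + 2 * \<alpha>\<^sup>2 * ww \<theta> + 2 * \<alpha>\<^sup>2 * ww \<theta>t)"
    by (rule integral_mono[OF int_fin int_fin step_point])
  also have "\<dots> = measure_pmf.expectation (P \<theta>t k) Phi
     - 2 * \<alpha> * measure_pmf.expectation (P \<theta>t k) ff + 2 * \<alpha>\<^sup>2 * measure_pmf.expectation (P \<theta>t k) ww
     + 2 * \<alpha>\<^sup>2 * ww \<theta>t"
    by (simp add: int_fin)
  finally show ?thesis .
qed

lemma inner_tel: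
  "measure_pmf.expectation (P \<theta>t k) Phi + 2 * \<alpha> * (\<Sum>j<k. measure_pmf.expectation (P \<theta>t j) ff)
     - 2 * \<alpha>\<^sup>2 * (\<Sum>j<k. measure_pmf.expectation (P \<theta>t j) ww) \<le> Phi \<theta>t + 2 * \<alpha>\<^sup>2 * real k * ww \<theta>t"
proof (induction k)
  case 0
  then show ?case by simp
next
  case (Suc k)
  then show ?case using inner_step[of \<theta>t k] by (simp add: algebra_simps)
qed

lemma epoch_exp:
  "measure_pmf.expectation (svrg_epoch \<phi> r \<gamma> s N \<alpha> M \<theta>t) h = (\<Sum>j<M. measure_pmf.expectation (P \<theta>t j) h) / real M"
  unfolding svrg_epoch_def using M1
  by (subst pmf_expectation_bind_pmf_of_set) (auto simp: fin_inner atLeast0LessThan sum_divide_distrib divide_inverse_commute sum_distrib_left lessThan_empty_iff)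

lemma epoch_ineq:
  "2 * \<alpha> * real M * measure_pmf.expectation (svrg_epoch \<phi> r \<gamma> s N \<alpha> M \<theta>t) ff
   - 2 * real M * \<alpha>\<^sup>2 * measure_pmf.expectation (svrg_epoch \<phi> r \<gamma> s N \<alpha> M \<theta>t) ww
   \<le> Phi \<theta>t + 2 * \<alpha>\<^sup>2 * real M * ww \<theta>t"
proof -
  have Mp: "real M > 0" using M1 by simp
  have "0 \<le> measure_pmf.expectation (P \<theta>t M) Phi" by (rule Bochner_Integration.integral_nonneg) auto
  moreover have "2 * \<alpha> * real M * measure_pmf.expectation (svrg_epoch \<phi> r \<gamma> s N \<alpha> M \<theta>t) ff
   - 2 * real M * \<alpha>\<^sup>2 * measure_pmf.expectation (svrg_epoch \<phi> r \<gamma> s N \<alpha> M \<theta>t) ww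
    = 2 * \<alpha> * (\<Sum>j<M. measure_pmf.expectation (P \<theta>t j) ff) - 2 * \<alpha>\<^sup>2 * (\<Sum>j<M. measure_pmf.expectation (P \<theta>t j) ww)"
    using Mp by (simp add: epoch_exp)
  ultimately show ?thesis using inner_tel[of \<theta>t M] by linarith
qed

end

theorem lemma1:
  fixes \<phi> :: "'a::finite \<Rightarrow> real^'d" and r :: "'a \<Rightarrow> 'a \<Rightarrow> real" and \<gamma> \<alpha> :: real
    and s :: "nat \<Rightarrow> 'a" and N M m :: nat and \<theta>0 :: "real^'d"
  assumes "\<And>x. norm (\<phi> x) \<le> 1"
    and "0 \<le> \<gamma>" and "\<gamma> < 1"
    and "N \<ge> 1"
    and "invertible (A_d \<phi> \<gamma> s N)"
    and "\<alpha> > 0" and "M \<ge> 1" and "m \<ge> 1"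
  shows "2 * \<alpha> * real M * measure_pmf.expectation (svrg_run \<phi> r \<gamma> s N \<alpha> M \<theta>0 m) (f_d \<phi> r \<gamma> s N)
         - 2 * real M * \<alpha>\<^sup>2 * measure_pmf.expectation (svrg_run \<phi> r \<gamma> s N \<alpha> M \<theta>0 m) (w_d \<phi> r \<gamma> s N)
       \<le> measure_pmf.expectation (svrg_run \<phi> r \<gamma> s N \<alpha> M \<theta>0 (m - 1))
            (\<lambda>\<theta>. (norm (\<theta> - theta_star \<phi> r \<gamma> s N))\<^sup>2)
         + 2 * \<alpha>\<^sup>2 * real M * measure_pmf.expectation (svrg_run \<phi> r \<gamma> s N \<alpha> M \<theta>0 (m - 1)) (w_d \<phi> r \<gamma> s N)"
proof -
  obtain m' where m': "m = Suc m'" using assms(8) by (cases m) auto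
  let ?R = "svrg_run \<phi> r \<gamma> s N \<alpha> M \<theta>0 m'"
  let ?E = "svrg_epoch \<phi> r \<gamma> s N \<alpha> M"
  have intR: "integrable (measure_pmf ?R) (h :: _ \<Rightarrow> real)" for h
    by (rule integrable_measure_pmf_finite[OF fin_run]) (use assms in auto)
  have eb: "measure_pmf.expectation (svrg_run \<phi> r \<gamma> s N \<alpha> M \<theta>0 m) h
      = measure_pmf.expectation ?R (\<lambda>x. measure_pmf.expectation (?E x) h)" for h :: "_ \<Rightarrow> real"
    unfolding m' svrg_run.simps
    by (rule exp_bind[OF fin_run fin_epoch]) (use assms in auto)
  have "2 * \<alpha> * real M * measure_pmf.expectation (svrg_run \<phi> r \<gamma> s N \<alpha> M \<theta>0 m) (f_d \<phi> r \<gamma> s N)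
         - 2 * real M * \<alpha>\<^sup>2 * measure_pmf.expectation (svrg_run \<phi> r \<gamma> s N \<alpha> M \<theta>0 m) (w_d \<phi> r \<gamma> s N)
      = measure_pmf.expectation ?R (\<lambda>x. 2 * \<alpha> * real M * measure_pmf.expectation (?E x) (f_d \<phi> r \<gamma> s N)
         - 2 * real M * \<alpha>\<^sup>2 * measure_pmf.expectation (?E x) (w_d \<phi> r \<gamma> s N))"
    by (simp add: eb intR)
  also have "\<dots> \<le> measure_pmf.expectation ?R (\<lambda>x. (norm (x - theta_star \<phi> r \<gamma> s N))\<^sup>2
         + 2 * \<alpha>\<^sup>2 * real M * w_d \<phi> r \<gamma> s N x)"
    by (rule integral_mono[OF intR intR epoch_ineq]) (use assms in auto)
  also have "\<dots> = measure_pmf.expectation ?R (\<lambda>\<theta>. (norm (\<theta> - theta_star \<phi> r \<gamma> s N))\<^sup>2)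
         + 2 * \<alpha>\<^sup>2 * real M * measure_pmf.expectation ?R (w_d \<phi> r \<gamma> s N)"
    by (simp add: intR)
  finally show ?thesis by (simp add: m')
qed

end
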